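(* Let $h,r>0$ with $\frac hr\le\omega$. Then on $[-h,h]$, $$\frac{d}{dx}\left(\frac{1}{\rho_0}\,f'(\rho_0')\right)\ge0,$$ where $f'(t)=\frac{t(t^2+2)}{(1+t^2)^{3/2}}$ (the derivative of $f(t)=t^2/\sqrt{1+t^2}$).
   Context: Let $\Xi$ be the unique positive solution of $\xi\tanh\frac1\xi+\mathrm{sech}^2\frac1\xi=\xi$, and $\omega=\frac{1}{\Xi\cosh(1/\Xi)}$. Under $h/r\le\omega$, let $\Pi_0>0$ be the largest solution of $r=\Pi\cosh\frac{h}{\Pi}$ and $\rho_0(x)=\Pi_0\cosh\frac{x}{\Pi_0}$ on $[-h,h]$. *)

theory Defs
  imports "HOL-Analysis.Analysis"
begin

definition Xi :: real where
  "Xi = (THE \<xi>::real. \<xi> > 0 \<and> \<xi> * tanh (1/\<xi>) + 1 / (cosh (1/\<xi>))^2 = \<xi>)"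

definition omega :: real where
  "omega = 1 / (Xi * cosh (1/Xi))"

definition Pi0 :: "real \<Rightarrow> real \<Rightarrow> real" where
  "Pi0 h r = (GREATEST P::real. P > 0 \<and> r = P * cosh (h/P))"

definition rho0 :: "real \<Rightarrow> real \<Rightarrow> real \<Rightarrow> real" where
  "rho0 h r x = Pi0 h r * cosh (x / Pi0 h r)"

definition fprime :: "real \<Rightarrow> real" where
  "fprime t = t * (t^2 + 2) / (1 + t^2) powr (3/2)"

end

theory Submission
  imports Defs
begin


lemma exp_lower4: "(x::real) \<ge> 0 \<Longrightarrow> 1 + x + x^2/2 + x^3/6 + x^4/24 \<le> exp x"
proof -
  assume x: "x \<ge> 0"
  obtain t where t: "exp x = (\<Sum>m<5. (x ^ m) / fact m) + (exp t / fact 5) * x ^ 5"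
    using Maclaurin_exp_le[of x 5] by blast
  have "(exp t / fact 5) * x ^ 5 \<ge> 0" using x by simp
  moreover have "(\<Sum>m<5. (x ^ m) / fact m) = 1 + x + x^2/2 + x^3/6 + x^4/24"
    by (simp add: numeral_eq_Suc fact_numeral)
  ultimately show ?thesis using t by linarith
qed

lemma G_pos: "2 * (129/200::real) - 1 - exp (-2 * (129/200)) > 0"
proof -
  have "exp (129/100::real) \<ge> 1 + 129/100 + (129/100)^2/2 + (129/100)^3/6 + (129/100)^4/24"
    by (rule exp_lower4) simp
  moreover have "1 + 129/100 + (129/100)^2/2 + (129/100)^3/6 + (129/100)^4/24 > (100/29::real)" by (simp add: power_divide)
  ultimately have e: "exp (129/100::real) > 1/(29/100)" by simp
  have "exp (-2 * (129/200::real)) = 1 / exp (129/100)" by (simp add: exp_minus field_simps)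
  also have "\<dots> < 29/100" using e by (simp add: field_simps)
  finally show ?thesis by simp
qed

lemma exp_upper_part: "exp (129/200::real) \<le> (1 + 129/3200 + (129/3200)^2)^16"
proof -
  have "exp (129/200::real) = exp (129/3200) ^ 16"
    using exp_of_nat_mult[of 16 "129/3200::real"] by simp
  also have "\<dots> \<le> (1 + 129/3200 + (129/3200)^2)^16"
    by (rule power_mono[OF exp_bound]) auto
  finally show ?thesis .
qed

lemma cosh_bound: "cosh (129/200::real) \<le> 124/100"
proof -
  have a: "exp (129/200::real) \<le> 193/100"
  proof -
    have "(1 + 129/3200 + (129/3200)^2)^16 \<le> (193/100::real)" by (simp add: power_divide)
    thus ?thesis using exp_upper_part by linarith
  qed
  have "exp (129/200::real) \<ge> 1 + 129/200 + (129/200)^2/2 + (129/200)^3/6 + (129/200)^4/24"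
    by (rule exp_lower4) simp
  hence b: "exp (-(129/200::real)) \<le> 53/100" by (simp add: exp_minus field_simps)
  show ?thesis unfolding cosh_def using a b by simp
qed


definition G :: "real \<Rightarrow> real" where "G u = 2*u - 1 - exp (-2*u)"

lemma G_mono: "u < v \<Longrightarrow> G u < G v"
proof -
  assume "u < v"
  hence "exp (-2 * v) < exp (-2 * u)" by simp
  thus ?thesis unfolding G_def using \<open>u<v\<close> by linarith
qed

lemma G_root: "\<exists>u0. 0 < u0 \<and> u0 < 129/200 \<and> G u0 = 0"
proof -
  have c: "\<forall>x. 0 \<le> x \<and> x \<le> 129/200 \<longrightarrow> isCont G x"
    unfolding G_def[abs_def] by (intro allI impI continuous_intros)
  have g0: "G 0 \<le> 0" by (simp add: G_def)
  have g1: "0 \<le> G (129/200)" using G_pos unfolding G_def by linarith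
  obtain x where x: "0 \<le> x" "x \<le> 129/200" "G x = 0" using IVT[OF g0 g1 _ c] by auto
  have "x \<noteq> 0" using x by (auto simp: G_def)
  moreover have "x \<noteq> 129/200"
  proof
    assume a: "x = 129/200"
    from x(3) have "G (129/200) = 0" unfolding a .
    with G_pos show False unfolding G_def by linarith
  qed
  ultimately show ?thesis using x by (intro exI[of _ x]) simp
qed


lemma xi_eq_iff:
  assumes "\<xi> > 0"
  shows "(\<xi> * tanh (1/\<xi>) + 1 / (cosh (1/\<xi>))^2 = \<xi>) \<longleftrightarrow> G (1/\<xi>) = 0"
proof -
  define u where "u = 1/\<xi>"
  have u: "u > 0" "\<xi> = 1/u" using assms by (auto simp: u_def)
  define a where "a = exp u"
  define b where "b = exp (-u)"
  have ab: "a * b = 1" "a > 0" "b > 0" by (auto simp: a_def b_def exp_minus)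
  have e0: "exp (-2*u) = b^2" by (simp add: b_def flip: exp_of_nat_mult)
  have sc: "sinh u = (a - b)/2" "cosh u = (a+b)/2" by (auto simp: a_def b_def sinh_field_def cosh_field_def)
  have cpos: "a + b > 0" using ab by simp
  have "(\<xi> * tanh u + 1 / (cosh u)^2 = \<xi>) \<longleftrightarrow> (sinh u * cosh u + u = cosh u ^ 2)"
    apply (subst (1 2) u(2)) using u apply (simp add: tanh_def field_simps power2_eq_square)
    by (metis distrib_left mult_cancel_left less_irrefl)
  also have "\<dots> \<longleftrightarrow> G u = 0"
  proof -
    have e1: "sinh u * cosh u = (a^2 - b^2)/4" unfolding sc by (simp add: power2_eq_square algebra_simps)
    have e2: "cosh u^2 = (a^2 + 2 + b^2)/4" unfolding sc using ab(1) by (simp add: power2_eq_square algebra_simps)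
    show ?thesis unfolding e1 e2 G_def e0 by (simp add: field_simps) (smt (verit))
  qed
  finally show ?thesis by (simp add: u_def)
qed

lemma Xi_omega: "\<exists>u0. 0 < u0 \<and> u0 < 129/200 \<and> G u0 = 0 \<and> Xi = 1/u0 \<and> omega = u0 / cosh u0"
proof -
  obtain u0 where u0: "0 < u0" "u0 < 129/200" "G u0 = 0" using G_root by blast
  have "Xi = 1/u0"
    unfolding Xi_def
  proof (rule the_equality)
    show "1/u0 > 0 \<and> 1/u0 * tanh (1/(1/u0)) + 1 / (cosh (1/(1/u0)))^2 = 1/u0"
      using u0 xi_eq_iff[of "1/u0"] by simp
    fix \<xi> :: real assume "\<xi> > 0 \<and> \<xi> * tanh (1/\<xi>) + 1 / (cosh (1/\<xi>))^2 = \<xi>"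
    hence "\<xi> > 0" "G (1/\<xi>) = 0" using xi_eq_iff by auto
    hence "1/\<xi> = u0" using u0 G_mono by (metis linorder_neqE_linordered_idom less_irrefl)
    thus "\<xi> = 1/u0" by auto
  qed
  moreover have "omega = u0 / cosh u0" unfolding omega_def \<open>Xi = 1/u0\<close> using u0 by simp
  ultimately show ?thesis using u0 by blast
qed


lemma g_mono:
  assumes "0 \<le> a" "a < b" "b \<le> 1"
  shows "a / cosh a < b / cosh (b::real)"
proof (rule DERIV_pos_imp_increasing[OF assms(2)])
  fix x assume x: "a \<le> x" "x \<le> b"
  have d: "((\<lambda>u. u / cosh u) has_real_derivative (cosh x - x * sinh x) / (cosh x)^2) (at x)"
    by (auto intro!: derivative_eq_intros simp: power2_eq_square)
  have "x * sinh x \<le> 1 * sinh x"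
    using x assms by (intro mult_right_mono) auto
  hence "x * sinh x < cosh x" using sinh_less_cosh_real[of x] by linarith
  hence "(cosh x - x * sinh x) / (cosh x)^2 > 0" by simp
  with d show "\<exists>y. ((\<lambda>u. u / cosh u) has_real_derivative y) (at x) \<and> y > 0" by blast
qed

lemma Pi0_char:
  fixes h r :: real
  assumes "h > 0" "r > 0" "h / r \<le> omega"
  shows "\<exists>ua. 0 < ua \<and> ua < 129/200 \<and> Pi0 h r = h / ua"
proof -
  obtain u0 where u0: "0 < u0" "u0 < 129/200" "omega = u0 / cosh u0" using Xi_omega by blast
  have c: "\<forall>x. 0 \<le> x \<and> x \<le> u0 \<longrightarrow> isCont (\<lambda>u. u / cosh u) x"
    by (intro allI impI continuous_intros) auto
  have g0: "0 / cosh 0 \<le> h / r" using assms by simp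
  have g1: "h / r \<le> u0 / cosh u0" using assms u0 by simp
  obtain ua where ua: "0 \<le> ua" "ua \<le> u0" "ua / cosh ua = h / r"
    using IVT[OF g0 g1 _ c] u0 by auto
  have "ua \<noteq> 0" using ua assms by auto
  hence uapos: "ua > 0" using ua by linarith
  define P where "P = h / ua"
  have Ppos: "P > 0" using uapos assms by (simp add: P_def)
  have hP: "h / P = ua" using uapos assms by (simp add: P_def)
  have solP: "r = P * cosh (h / P)"
    unfolding hP using ua(3) uapos assms by (simp add: P_def field_simps)
  have "Pi0 h r = P"
    unfolding Pi0_def
  proof (rule Greatest_equality)
    show "P > 0 \<and> r = P * cosh (h / P)" using Ppos solP by simp
    fix Q :: real assume Q: "Q > 0 \<and> r = Q * cosh (h / Q)"
    show "Q \<le> P"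
    proof (rule ccontr)
      assume "\<not> Q \<le> P"
      hence QP: "Q > P" by simp
      have uq: "h / Q < ua" unfolding hP[symmetric] using QP Ppos assms(1) by (simp add: divide_strict_left_mono)
      have "h / Q / cosh (h / Q) < ua / cosh ua"
        by (rule g_mono) (use uq ua u0 Q assms in auto)
      moreover have "h / Q / cosh (h / Q) = h / r" using Q assms by (simp add: field_simps)
      ultimately show False using ua(3) by linarith
    qed
  qed
  thus ?thesis using uapos ua u0 by (auto simp: P_def)
qed


lemma fprime_sinh: "fprime (sinh s) = sinh s * (sinh s ^ 2 + 2) / cosh s ^ 3"
proof -
  have c0: "cosh s \<ge> 0" by simp
  have "cosh s ^ 3 = cosh s powr 3" using powr_numeral[OF c0, of "num.Bit1 num.One"] by simp
  also have "\<dots> = (cosh s powr 2) powr (3/2)" by (subst powr_powr) simp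
  also have "\<dots> = (cosh s ^ 2) powr (3/2)" using powr_numeral[OF c0, of "num.Bit0 num.One"] by simp
  also have "\<dots> = (1 + sinh s ^ 2) powr (3/2)" using cosh_square_eq[of s] by (simp add: add.commute)
  finally show ?thesis unfolding fprime_def by simp
qed

lemma derivF:
  assumes "P > 0"
  shows "((\<lambda>y. sinh (y/P) * (sinh (y/P) ^ 2 + 2) / (P * cosh (y/P) ^ 4)) has_real_derivative
     (4 - cosh (x/P)^4 - cosh (x/P)^2) / (P^2 * cosh (x/P)^5)) (at x)"
proof -
  have "((\<lambda>y. sinh (y/P) * (sinh (y/P) ^ 2 + 2) / (P * cosh (y/P) ^ 4)) has_real_derivative
     ((cosh (x/P) * (1/P) * (sinh (x/P) ^ 2 + 2) + sinh (x/P) * (2 * sinh (x/P) * (cosh (x/P) * (1/P)))) * (P * cosh (x/P) ^ 4)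
      - sinh (x/P) * (sinh (x/P) ^ 2 + 2) * (P * (4 * cosh (x/P)^3 * (sinh (x/P) * (1/P))))) / (P * cosh (x/P) ^ 4)^2) (at x)"
    using assms by (auto intro!: derivative_eq_intros simp: power2_eq_square)
  moreover have "((cosh (x/P) * (1/P) * (sinh (x/P) ^ 2 + 2) + sinh (x/P) * (2 * sinh (x/P) * (cosh (x/P) * (1/P)))) * (P * cosh (x/P) ^ 4)
      - sinh (x/P) * (sinh (x/P) ^ 2 + 2) * (P * (4 * cosh (x/P)^3 * (sinh (x/P) * (1/P))))) / (P * cosh (x/P) ^ 4)^2
     = (4 - cosh (x/P)^4 - cosh (x/P)^2) / (P^2 * cosh (x/P)^5)"
  proof -
    define c where "c = cosh (x/P)"
    define s where "s = sinh (x/P)"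
    have sc: "s^2 = c^2 - 1" unfolding s_def c_def by (rule sinh_square_eq)
    have cpos: "c > 0" unfolding c_def by simp
    have "((c * (1/P) * (s ^ 2 + 2) + s * (2 * s * (c * (1/P)))) * (P * c ^ 4)
      - s * (s ^ 2 + 2) * (P * (4 * c^3 * (s * (1/P))))) / (P * c ^ 4)^2
      = (c^5 * (s^2+2) + 2 * c^5 * s^2 - 4 * c^3 * s^2 * (s^2+2)) / (P^2 * c^8)"
      using assms cpos apply (simp add: field_simps power2_eq_square) by algebra
    also have "\<dots> = (c^5 * (c^2+1) + 2 * c^5 * (c^2-1) - 4 * c^3 * (c^2-1) * (c^2+1)) / (P^2 * c^8)"
      unfolding sc by algebra
    also have "\<dots> = (4 - c^4 - c^2) / (P^2 * c^5)"
      using assms cpos by (simp add: field_simps)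
    finally show ?thesis unfolding c_def s_def .
  qed
  ultimately show ?thesis by simp
qed


theorem lemma4p3:
  fixes h r :: real
  assumes "h > 0" and "r > 0" and "h / r \<le> omega"
  shows "\<forall>x\<in>{-h..h}.
           deriv (\<lambda>y. (1 / rho0 h r y) * fprime (deriv (rho0 h r) y)) x \<ge> 0"
proof
  fix x assume x: "x \<in> {-h..h}"
  obtain ua where ua: "0 < ua" "ua < 129/200" "Pi0 h r = h / ua" using Pi0_char[OF assms] by blast
  define P where "P = Pi0 h r"
  have Ppos: "P > 0" using ua assms by (simp add: P_def)
  have rho: "rho0 h r = (\<lambda>y. P * cosh (y / P))" by (simp add: rho0_def P_def fun_eq_iff)
  have drho: "deriv (rho0 h r) = (\<lambda>y. sinh (y / P))"
  proof
    fix y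
    have "((\<lambda>y. P * cosh (y / P)) has_real_derivative sinh (y / P)) (at y)"
      using Ppos by (auto intro!: derivative_eq_intros)
    thus "deriv (rho0 h r) y = sinh (y / P)" unfolding rho by (rule DERIV_imp_deriv)
  qed
  have F: "(\<lambda>y. (1 / rho0 h r y) * fprime (deriv (rho0 h r) y)) =
      (\<lambda>y. sinh (y/P) * (sinh (y/P) ^ 2 + 2) / (P * cosh (y/P) ^ 4))"
    unfolding drho unfolding rho fprime_sinh by (simp add: fun_eq_iff field_simps eval_nat_numeral)
  have dd: "deriv (\<lambda>y. (1 / rho0 h r y) * fprime (deriv (rho0 h r) y)) x
      = (4 - cosh (x/P)^4 - cosh (x/P)^2) / (P^2 * cosh (x/P)^5)"
    unfolding F by (rule DERIV_imp_deriv[OF derivF[OF Ppos]])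
  have hP: "h / P = ua" using ua assms by (simp add: P_def)
  have "\<bar>x / P\<bar> \<le> h / P" using x Ppos by (auto simp: divide_right_mono abs_le_iff)
  hence ax: "\<bar>x / P\<bar> \<le> 129/200" using hP ua by linarith
  have "cosh (x/P) = cosh \<bar>x/P\<bar>" by simp
  also have "\<dots> \<le> cosh (129/200)" using ax by (subst cosh_real_nonneg_le_iff) auto
  finally have cb: "cosh (x/P) \<le> 124/100" using cosh_bound by linarith
  define c where "c = cosh (x/P)"
  have c1: "c \<ge> 0" unfolding c_def by simp
  have "c^4 \<le> (124/100)^4" using cb c1 unfolding c_def by (intro power_mono) auto
  moreover have "c^2 \<le> (124/100)^2" using cb c1 unfolding c_def by (intro power_mono) auto
  ultimately have "4 - c^4 - c^2 \<ge> 0" by (simp add: power_divide)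
  hence "(4 - c^4 - c^2) / (P^2 * c^5) \<ge> 0" using c1 by simp
  thus "deriv (\<lambda>y. (1 / rho0 h r y) * fprime (deriv (rho0 h r) y)) x \<ge> 0"
    unfolding dd c_def .
qed
end
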